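(* Let $N\ge2$ and $0\le k\le N$. For complex $\xi_1,\dots,\xi_N$ with $|\xi_i|<1$ for all $i$, \[ \sum_{\sigma\in S_N}\operatorname{sgn}(\sigma)\prod_{j=1}^{k}\Big(\frac{1-\xi_j}{1-\xi_{\sigma(j)}}\Big)^{j-1}\prod_{j=k+1}^{N}\Big(\frac{1-\xi_j}{1-\xi_{\sigma(j)}}\Big)^{j-2}\cdot\frac{\prod_{j=2}^N\xi_{\sigma(j)}^{\,j-1}}{\prod_{m=k+1}^{N}\Big(1-\prod_{l=m}^N\xi_{\sigma(l)}\Big)} =\prod_{i=1}^k(1-\xi_i)\prod_{1\le i<j\le N}\frac{\xi_j-\xi_i}{1-\xi_i}\prod_{i=1}^N\frac{1}{1-\xi_i}, \] where empty products equal $1$. *)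

theory Defs
  imports "HOL-Analysis.Analysis" "HOL-Combinatorics.Permutations"
begin

end

theory Submission
  imports Defs "Jordan_Normal_Form.Determinant" "HOL-Computational_Algebra.Polynomial"
begin

lemma vandermonde0:
  fixes z :: "nat \<Rightarrow> complex"
  shows "(\<Sum>p | p permutes {0..<n}. of_int (sign p) * (\<Prod>i=0..<n. z (p i) ^ i))
       = (\<Prod>i=0..<n. \<Prod>l=0..<i. (z i - z l))"
proof -
  define A where "A = mat n n (\<lambda>(i,j). z i ^ j)"
  define P where "P j = (\<Prod>l=0..<j. [:- z l, 1:])" for j
  define U where "U = mat n n (\<lambda>(c,j). coeff (P j) c)"
  have A: "A \<in> carrier_mat n n" and U: "U \<in> carrier_mat n n" by (auto simp: A_def U_def)
  have degP: "degree (P j) = j" for j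
    unfolding P_def by (subst degree_prod_sum_eq) auto
  have lcP: "coeff (P j) j = 1" for j
    using lead_coeff_prod[of "\<lambda>l. [:- z l, 1:]" "{0..<j}"] degP[of j] unfolding P_def by simp
  have polyP: "poly (P j) x = (\<Prod>l=0..<j. (x - z l))" for j x
    unfolding P_def poly_prod by simp
  have AU: "(A * U) $$ (i,j) = poly (P j) (z i)" if "i < n" "j < n" for i j
  proof -
    have "(A * U) $$ (i,j) = (\<Sum>c=0..<n. z i ^ c * coeff (P j) c)"
      using that A U by (simp add: A_def U_def scalar_prod_def row_def col_def)
    also have "\<dots> = (\<Sum>c\<le>degree (P j). coeff (P j) c * z i ^ c)"
    proof -
      have "(\<Sum>c=0..<n. z i ^ c * coeff (P j) c) = (\<Sum>c\<in>{..degree (P j)}. z i ^ c * coeff (P j) c)"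
        by (rule sum.mono_neutral_right) (use that degP in \<open>auto simp: coeff_eq_0\<close>)
      then show ?thesis by (simp add: mult.commute)
    qed
    also have "\<dots> = poly (P j) (z i)" by (simp add: poly_altdef)
    finally show ?thesis .
  qed
  have "det (A * U) = prod_list (diag_mat (A * U))"
  proof (rule det_lower_triangular[of n])
    fix i j assume ij: "i < j" "j < n"
    then have "(A * U) $$ (i,j) = poly (P j) (z i)" by (intro AU) auto
    also have "\<dots> = 0" unfolding polyP using ij by (intro prod_zero) (auto intro!: bexI[of _ i])
    finally show "(A * U) $$ (i,j) = 0" .
  qed (use A U in auto)
  also have "\<dots> = (\<Prod>i=0..<n. \<Prod>l=0..<i. (z i - z l))"
  proof -
    have "diag_mat (A * U) = map (\<lambda>i. \<Prod>l=0..<i. (z i - z l)) [0..<n]"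
      using A U unfolding diag_mat_def by (intro map_cong) (auto simp: AU polyP simp del: index_mult_mat(1))
    then show ?thesis by (simp add: prod.distinct_set_conv_list[symmetric])
  qed
  finally have 1: "det (A * U) = (\<Prod>i=0..<n. \<Prod>l=0..<i. (z i - z l))" .
  have "det U = prod_list (diag_mat U)"
    by (rule det_upper_triangular[OF _ U]) (auto simp: upper_triangular_def U_def coeff_eq_0 degP)
  also have "\<dots> = 1"
  proof -
    have "diag_mat U = map (\<lambda>i. 1) [0..<n]"
      unfolding diag_mat_def U_def by (intro map_cong) (auto simp: lcP)
    then show ?thesis by (simp add: prod.distinct_set_conv_list[symmetric])
  qed
  finally have 2: "det U = 1" .
  have "det A = (\<Prod>i=0..<n. \<Prod>l=0..<i. (z i - z l))" using 1 2 det_mult[OF A U] by simp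
  moreover have "det A = det (transpose_mat A)" using det_transpose[OF A] by simp
  moreover have "det (transpose_mat A) = (\<Sum>p | p permutes {0..<n}. of_int (sign p) * (\<Prod>i=0..<n. z (p i) ^ i))"
    by (subst det_def'[of _ n]) (use A in \<open>auto simp: A_def permutes_in_image intro!: sum.cong prod.cong\<close>)
  ultimately show ?thesis by simp
qed
lemma bij_Suc: "bij_betw Suc {0..<N} {1..N}"
  by (rule bij_betwI[where g="\<lambda>x. x - 1"]) auto

lemma vandermonde1:
  fixes y :: "nat \<Rightarrow> complex"
  shows "(\<Sum>\<sigma> | \<sigma> permutes {1..N}. of_int (sign \<sigma>) * (\<Prod>j=1..N. y (\<sigma> j) ^ (j-1)))
       = (\<Prod>j=1..N. \<Prod>i=1..<j. (y j - y i))"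
proof -
  define M where "M p = map_permutation {0..<N} Suc p" for p
  have bS: "bij_betw Suc {0..<N} {1..N}" by (rule bij_Suc)
  have bP: "bij_betw (\<lambda>x. x - 1) {1..N} {0..<N}"
    by (rule bij_betwI[where g="Suc"]) auto
  have bij: "bij_betw M {p. p permutes {0..<N}} {\<sigma>. \<sigma> permutes {1..N}}"
  proof (rule bij_betwI[where g="\<lambda>\<sigma>. map_permutation {1..N} (\<lambda>x. x - 1) \<sigma>"])
    show "M \<in> {p. p permutes {0..<N}} \<rightarrow> {\<sigma>. \<sigma> permutes {1..N}}"
      unfolding M_def using map_permutation_permutes[OF bS] by auto
    show "(\<lambda>\<sigma>. map_permutation {1..N} (\<lambda>x. x - 1) \<sigma>) \<in> {\<sigma>. \<sigma> permutes {1..N}} \<rightarrow> {p. p permutes {0..<N}}"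
      using map_permutation_permutes[OF bP] by auto
    show "map_permutation {1..N} (\<lambda>x. x - 1) (M p) = p" if "p \<in> {p. p permutes {0..<N}}" for p
      unfolding M_def using map_permutation_compose_inv[OF bS, of p "\<lambda>x. x - 1"] that by auto
    show "M (map_permutation {1..N} (\<lambda>x. x - 1) \<sigma>) = \<sigma>" if "\<sigma> \<in> {\<sigma>. \<sigma> permutes {1..N}}" for \<sigma>
      unfolding M_def using map_permutation_compose_inv[OF bP, of \<sigma> Suc] that by auto
  qed
  have "(\<Sum>\<sigma> | \<sigma> permutes {1..N}. of_int (sign \<sigma>) * (\<Prod>j=1..N. y (\<sigma> j) ^ (j-1)))
      = (\<Sum>p | p permutes {0..<N}. of_int (sign (M p)) * (\<Prod>j=1..N. y (M p j) ^ (j-1)))"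
    using sum.reindex_bij_betw[OF bij, of "\<lambda>\<sigma>. of_int (sign \<sigma>) * (\<Prod>j=1..N. y (\<sigma> j) ^ (j-1))"]
    by simp
  also have "\<dots> = (\<Sum>p | p permutes {0..<N}. of_int (sign p) * (\<Prod>i=0..<N. y (Suc (p i)) ^ i))"
  proof (intro sum.cong refl)
    fix p assume p: "p \<in> {p. p permutes {0..<N}}"
    have s: "sign (M p) = sign p" unfolding M_def
      by (rule sign_map_permutation) (use p in auto)
    have "(\<Prod>j=1..N. y (M p j) ^ (j-1)) = (\<Prod>i=0..<N. y (M p (Suc i)) ^ (Suc i - 1))"
      using prod.reindex_bij_betw[OF bS, of "\<lambda>j. y (M p j) ^ (j-1)"] by simp
    also have "\<dots> = (\<Prod>i=0..<N. y (Suc (p i)) ^ i)"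
      unfolding M_def by (intro prod.cong refl) (subst map_permutation_apply, auto)
    finally show "of_int (sign (M p)) * (\<Prod>j=1..N. y (M p j) ^ (j-1)) = of_int (sign p) * (\<Prod>i=0..<N. y (Suc (p i)) ^ i)"
      using s by simp
  qed
  also have "\<dots> = (\<Prod>i=0..<N. \<Prod>l=0..<i. (y (Suc i) - y (Suc l)))"
    using vandermonde0[of "\<lambda>i. y (Suc i)" N] by simp
  also have "\<dots> = (\<Prod>j=1..N. \<Prod>i=1..<j. (y j - y i))"
  proof -
    have "(\<Prod>j=1..N. \<Prod>i=1..<j. (y j - y i)) = (\<Prod>j=0..<N. \<Prod>i=1..<Suc j. (y (Suc j) - y i))"
      using prod.reindex_bij_betw[OF bS, of "\<lambda>j. \<Prod>i=1..<j. (y j - y i)"] by simp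
    also have "\<dots> = (\<Prod>j=0..<N. \<Prod>l=0..<j. (y (Suc j) - y (Suc l)))"
    proof -
      have "(\<Prod>i=Suc 0..<Suc j. (y (Suc j) - y i)) = (\<Prod>l=0..<j. (y (Suc j) - y (Suc l)))" for j
        using prod.atLeast_Suc_lessThan_Suc_shift[of "\<lambda>i. y (Suc j) - y i" 0 j] by (simp add: comp_def)
      then show ?thesis by simp
    qed
    finally show ?thesis by simp
  qed
  finally show ?thesis .
qed


definition cc :: "nat \<Rightarrow> nat \<Rightarrow> int" where
  "cc k j = (if j \<le> k then int j - 1 else int j - 2)"
definition PP :: "(nat \<Rightarrow> complex) \<Rightarrow> nat \<Rightarrow> (nat \<Rightarrow> nat) \<Rightarrow> nat \<Rightarrow> complex" where
  "PP \<xi> N \<sigma> m = (\<Prod>l=m..N. \<xi> (\<sigma> l))"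
definition DD :: "(nat \<Rightarrow> complex) \<Rightarrow> nat \<Rightarrow> nat \<Rightarrow> (nat \<Rightarrow> nat) \<Rightarrow> complex" where
  "DD \<xi> N k \<sigma> = (\<Prod>m=k+1..N. (1 - PP \<xi> N \<sigma> m))"
definition PI :: "(nat \<Rightarrow> complex) \<Rightarrow> nat \<Rightarrow> nat \<Rightarrow> (nat \<Rightarrow> nat) \<Rightarrow> complex" where
  "PI \<xi> N k \<sigma> = (\<Prod>j=1..N. (1 / (1 - \<xi> (\<sigma> j))) powi (cc k j) * \<xi> (\<sigma> j) ^ (j - 1))"
definition TT :: "(nat \<Rightarrow> complex) \<Rightarrow> nat \<Rightarrow> nat \<Rightarrow> (nat \<Rightarrow> nat) \<Rightarrow> complex" where
  "TT \<xi> N k \<sigma> = PI \<xi> N k \<sigma> / DD \<xi> N k \<sigma>"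
definition SS :: "(nat \<Rightarrow> complex) \<Rightarrow> nat \<Rightarrow> nat \<Rightarrow> complex" where
  "SS \<xi> N k = (\<Sum>\<sigma> | \<sigma> permutes {1..N}. of_int (sign \<sigma>) * TT \<xi> N k \<sigma>)"
definition FF :: "nat \<Rightarrow> nat \<Rightarrow> complex \<Rightarrow> complex" where
  "FF k j x = (1 / (1 - x)) powi (cc k j) * x ^ (j - 1) * (if j = k then x else 1)"
definition RR :: "(nat \<Rightarrow> complex) \<Rightarrow> nat \<Rightarrow> nat \<Rightarrow> (nat \<Rightarrow> nat) \<Rightarrow> complex" where
  "RR \<xi> N k \<sigma> = (\<Prod>j=1..N. FF k j (\<xi> (\<sigma> j))) / ((1 - PP \<xi> N \<sigma> k) * DD \<xi> N (k+1) \<sigma>)"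

lemma norm_prod_lt1:
  fixes f :: "nat \<Rightarrow> complex"
  assumes "finite A" "A \<noteq> {}" "\<And>x. x \<in> A \<Longrightarrow> norm (f x) < 1"
  shows "norm (prod f A) < 1"
  using assms
proof (induction A rule: finite_ne_induct)
  case (singleton x) then show ?case by simp
next
  case (insert x F)
  have a: "norm (f x) < 1" "norm (prod f F) < 1" using insert by auto
  have "norm (prod f (insert x F)) = norm (f x) * norm (prod f F)"
    using insert by (simp add: norm_mult)
  also have "\<dots> \<le> norm (f x)" using a by (simp add: mult_left_le)
  finally show ?case using a by simp
qed

lemma alg0: fixes x p d P u v :: complex
  assumes "u \<noteq> 0" "v \<noteq> 0" "d \<noteq> 0" "u = 1 - x * p" "v = 1 - p"
  shows "P * (1-x)/(u * (v * d)) - P/(v * d) = -(P * x/(u * d))"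
proof -
  have "P * (1-x)/(u * (v * d)) - P/(v * d) = (P * (1-x) - P * u)/(u * (v * d))"
    using assms(1-3) by (simp add: field_simps)
  also have "P * (1-x) - P * u = - (P * x) * v" unfolding assms(4,5) by (simp add: algebra_simps)
  also have "- (P * x) * v/(u * (v * d)) = -(P * x/(u * d))" using assms(1-3) by (simp add: field_simps)
  finally show ?thesis .
qed
lemma alg: fixes x p d P :: complex
  assumes "1 - x * p \<noteq> 0" "1 - p \<noteq> 0" "d \<noteq> 0"
  shows "P * (1-x)/((1-x * p) * ((1-p) * d)) - P/((1-p) * d) = -(P * x/((1-x * p) * d))"
  using alg0[OF assms refl refl] .

context
  fixes \<xi> :: "nat \<Rightarrow> complex" and N :: nat
  assumes small: "\<And>i. i \<in> {1..N} \<Longrightarrow> cmod (\<xi> i) < 1"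
begin

lemma a_nz: "\<sigma> permutes {1..N} \<Longrightarrow> j \<in> {1..N} \<Longrightarrow> 1 - \<xi> (\<sigma> j) \<noteq> 0"
  using small[of "\<sigma> j"] permutes_in_image[of \<sigma> "{1..N}" j] by auto

lemma PP_small: "\<sigma> permutes {1..N} \<Longrightarrow> 1 \<le> m \<Longrightarrow> m \<le> N \<Longrightarrow> cmod (PP \<xi> N \<sigma> m) < 1"
  unfolding PP_def
proof (rule norm_prod_lt1)
  fix x assume "\<sigma> permutes {1..N}" "1 \<le> m" "x \<in> {m..N}"
  then show "cmod (\<xi> (\<sigma> x)) < 1"
    using small[of "\<sigma> x"] permutes_in_image[of \<sigma> "{1..N}" x] by auto
qed auto

lemma PP_nz: "\<sigma> permutes {1..N} \<Longrightarrow> 1 \<le> m \<Longrightarrow> m \<le> N \<Longrightarrow> 1 - PP \<xi> N \<sigma> m \<noteq> 0"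
  using PP_small[of \<sigma> m] by auto

lemma DD_nz: "\<sigma> permutes {1..N} \<Longrightarrow> DD \<xi> N k \<sigma> \<noteq> 0"
  unfolding DD_def by (subst prod_zero_iff) (use PP_nz in auto)

lemma TT_step:
  assumes \<sigma>: "\<sigma> permutes {1..N}" and k: "1 \<le> k" "k \<le> N"
  shows "TT \<xi> N (k-1) \<sigma> - TT \<xi> N k \<sigma> = (if k < N then - RR \<xi> N k \<sigma> else 0)"
proof -
  define a where "a = 1 - \<xi> (\<sigma> k)"
  have kin: "k \<in> {1..N}" using k by auto
  have anz: "a \<noteq> 0" using a_nz[OF \<sigma> kin] by (simp add: a_def)
  have split: "(\<Prod>j=1..N. g j) = g k * (\<Prod>j\<in>{1..N}-{k}. g j)" for g :: "nat \<Rightarrow> complex"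
    using kin by (simp add: prod.remove)
  have PIk: "PI \<xi> N (k-1) \<sigma> = PI \<xi> N k \<sigma> * a"
  proof -
    have eq: "(\<Prod>j\<in>{1..N}-{k}. (1/(1-\<xi>(\<sigma> j))) powi cc (k-1) j * \<xi>(\<sigma> j)^(j-1))
        = (\<Prod>j\<in>{1..N}-{k}. (1/(1-\<xi>(\<sigma> j))) powi cc k j * \<xi>(\<sigma> j)^(j-1))"
      by (intro prod.cong refl) (auto simp: cc_def)
    have kk: "(1/a) powi cc (k-1) k = (1/a) powi cc k k * a"
    proof -
      have "cc (k-1) k = cc k k - 1" using k by (simp add: cc_def)
      then show ?thesis using anz by (simp add: power_int_diff)
    qed
    show ?thesis unfolding PI_def
      apply (subst (1 2) split)
      apply (subst eq)
      apply (simp only: a_def[symmetric] kk)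
      apply (simp add: algebra_simps)
      done
  qed
  have ins: "{m..N} = insert m {m+1..N}" if "m \<le> N" for m using that by auto
  have DDk: "DD \<xi> N (k-1) \<sigma> = (1 - PP \<xi> N \<sigma> k) * DD \<xi> N k \<sigma>"
    unfolding DD_def using k ins[of k] by simp
  have PPk: "PP \<xi> N \<sigma> k = \<xi> (\<sigma> k) * PP \<xi> N \<sigma> (k+1)"
    unfolding PP_def using k ins[of k] by simp
  have nz1: "1 - PP \<xi> N \<sigma> k \<noteq> 0" using PP_nz[OF \<sigma>] k by auto
  have Dnz: "DD \<xi> N j \<sigma> \<noteq> 0" for j using DD_nz[OF \<sigma>] .
  show ?thesis
  proof (cases "k < N")
    case True
    have DDk1: "DD \<xi> N k \<sigma> = (1 - PP \<xi> N \<sigma> (k+1)) * DD \<xi> N (k+1) \<sigma>"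
      unfolding DD_def using True ins[of "k+1"] by simp
    have nz2: "1 - PP \<xi> N \<sigma> (k+1) \<noteq> 0" using PP_nz[OF \<sigma>] True by auto
    have Fprod: "(\<Prod>j=1..N. FF k j (\<xi>(\<sigma> j))) = PI \<xi> N k \<sigma> * \<xi>(\<sigma> k)"
    proof -
      have "(\<Prod>j=1..N. FF k j (\<xi>(\<sigma> j))) = PI \<xi> N k \<sigma> * (\<Prod>j=1..N. if j = k then \<xi>(\<sigma> j) else 1)"
        unfolding FF_def PI_def by (simp add: prod.distrib)
      then show ?thesis using kin by simp
    qed
    have e1: "TT \<xi> N (k-1) \<sigma> - TT \<xi> N k \<sigma> = PI \<xi> N k \<sigma> * (1 - \<xi> (\<sigma> k)) /
       ((1 - \<xi> (\<sigma> k) * PP \<xi> N \<sigma> (k+1)) * ((1 - PP \<xi> N \<sigma> (k+1)) * DD \<xi> N (k+1) \<sigma>))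
       - PI \<xi> N k \<sigma> / ((1 - PP \<xi> N \<sigma> (k+1)) * DD \<xi> N (k+1) \<sigma>)"
      unfolding TT_def PIk DDk DDk1 PPk a_def by simp
    have e2: "RR \<xi> N k \<sigma> = PI \<xi> N k \<sigma> * \<xi> (\<sigma> k) / ((1 - \<xi> (\<sigma> k) * PP \<xi> N \<sigma> (k+1)) * DD \<xi> N (k+1) \<sigma>)"
      unfolding RR_def Fprod PPk by simp
    have "TT \<xi> N (k-1) \<sigma> - TT \<xi> N k \<sigma> = - RR \<xi> N k \<sigma>"
      unfolding e1 e2 by (rule alg) (use nz1 nz2 Dnz[of "k+1"] PPk in auto)
    then show ?thesis using True by simp
  next
    case False
    then have kN: "k = N" using k by simp
    have "PP \<xi> N \<sigma> k = \<xi> (\<sigma> k)" unfolding PP_def using kN by simp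
    then have "TT \<xi> N (k-1) \<sigma> = TT \<xi> N k \<sigma>"
      unfolding TT_def PIk DDk using anz Dnz[of k] by (simp add: a_def)
    then show ?thesis using False by simp
  qed
qed

lemma RR_sum_zero:
  assumes k: "1 \<le> k" "k < N"
  shows "(\<Sum>\<sigma> | \<sigma> permutes {1..N}. of_int (sign \<sigma>) * RR \<xi> N k \<sigma>) = 0"
proof -
  define \<tau> where "\<tau> = Transposition.transpose k (k+1)"
  have \<tau>: "\<tau> permutes {1..N}" unfolding \<tau>_def using k by (intro permutes_swap_id) auto
  have \<tau>k: "\<tau> permutes {k..N}" unfolding \<tau>_def using k by (intro permutes_swap_id) auto
  have FF\<tau>: "FF k (\<tau> j) = FF k j" for j
  proof -
    have "FF k k = FF k (k+1)"
    proof
      fix x :: complex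
      have "cc k k = cc k (k+1)" by (simp add: cc_def)
      moreover have "x ^ (k - 1) * x = x ^ (k + 1 - 1)" using k
        by (cases k) (auto simp: mult.commute)
      ultimately show "FF k k x = FF k (k+1) x" unfolding FF_def by (simp add: mult.assoc)
    qed
    then show ?thesis unfolding \<tau>_def by (cases "j = k"; cases "j = k+1") auto
  qed
  have inv: "RR \<xi> N k (\<sigma> \<circ> \<tau>) = RR \<xi> N k \<sigma>" for \<sigma>
  proof -
    have 1: "(\<Prod>j=1..N. FF k j (\<xi>((\<sigma> \<circ> \<tau>) j))) = (\<Prod>j=1..N. FF k j (\<xi>(\<sigma> j)))"
    proof -
      have "(\<Prod>j=1..N. FF k j (\<xi>(\<sigma> j))) = (\<Prod>j=1..N. ((\<lambda>j. FF k j (\<xi>(\<sigma> j))) \<circ> \<tau>) j)"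
        using prod.permute[OF \<tau>] by simp
      also have "\<dots> = (\<Prod>j=1..N. FF k j (\<xi>((\<sigma> \<circ> \<tau>) j)))" by (simp add: FF\<tau>)
      finally show ?thesis by simp
    qed
    have 2: "PP \<xi> N (\<sigma> \<circ> \<tau>) k = PP \<xi> N \<sigma> k"
      unfolding PP_def using prod.permute[OF \<tau>k, of "\<lambda>l. \<xi> (\<sigma> l)"] by (simp add: comp_def)
    have 3: "DD \<xi> N (k+1) (\<sigma> \<circ> \<tau>) = DD \<xi> N (k+1) \<sigma>"
      unfolding DD_def
    proof (intro prod.cong refl)
      fix m assume m: "m \<in> {k+1+1..N}"
      show "1 - PP \<xi> N (\<sigma> \<circ> \<tau>) m = 1 - PP \<xi> N \<sigma> m"
        unfolding PP_def using m by (auto intro!: prod.cong simp: \<tau>_def transpose_apply_other)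
    qed
    show ?thesis unfolding RR_def 1 2 3 ..
  qed
  have sgn: "sign (\<sigma> \<circ> \<tau>) = - sign \<sigma>" if "\<sigma> permutes {1..N}" for \<sigma>
  proof -
    have "permutation \<sigma>" "permutation \<tau>" using that \<tau> permutes_imp_permutation by auto
    then show ?thesis by (simp add: sign_compose \<tau>_def sign_swap_id)
  qed
  define X where "X = (\<Sum>\<sigma> | \<sigma> permutes {1..N}. of_int (sign \<sigma>) * RR \<xi> N k \<sigma>)"
  have "X = (\<Sum>\<sigma> | \<sigma> permutes {1..N}. of_int (sign (\<sigma> \<circ> \<tau>)) * RR \<xi> N k (\<sigma> \<circ> \<tau>))"
    unfolding X_def by (rule sum_permutations_compose_right[OF \<tau>])
  also have "\<dots> = (\<Sum>\<sigma> | \<sigma> permutes {1..N}. - (of_int (sign \<sigma>) * RR \<xi> N k \<sigma>))"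
    by (intro sum.cong refl) (simp add: sgn inv)
  also have "\<dots> = - X" unfolding X_def by (simp add: sum_negf)
  finally have "X = - X" .
  then show ?thesis unfolding X_def by simp
qed

lemma SS_step:
  assumes k: "1 \<le> k" "k \<le> N"
  shows "SS \<xi> N (k-1) = SS \<xi> N k"
proof -
  have "SS \<xi> N (k-1) - SS \<xi> N k
      = (\<Sum>\<sigma> | \<sigma> permutes {1..N}. of_int (sign \<sigma>) * (TT \<xi> N (k-1) \<sigma> - TT \<xi> N k \<sigma>))"
    unfolding SS_def by (simp add: sum_subtractf algebra_simps)
  also have "\<dots> = (\<Sum>\<sigma> | \<sigma> permutes {1..N}. of_int (sign \<sigma>) * (if k < N then - RR \<xi> N k \<sigma> else 0))"
  proof (intro sum.cong refl)
    fix \<sigma> assume "\<sigma> \<in> {\<sigma>. \<sigma> permutes {1..N}}"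
    then have "TT \<xi> N (k-1) \<sigma> - TT \<xi> N k \<sigma> = (if k < N then - RR \<xi> N k \<sigma> else 0)"
      using TT_step[OF _ k] by simp
    then show "of_int (sign \<sigma>) * (TT \<xi> N (k-1) \<sigma> - TT \<xi> N k \<sigma>)
       = of_int (sign \<sigma>) * (if k < N then - RR \<xi> N k \<sigma> else 0)" by simp
  qed
  also have "\<dots> = 0"
  proof (cases "k < N")
    case True
    then show ?thesis using RR_sum_zero[OF k(1) True] by (simp add: sum_negf)
  qed simp
  finally show ?thesis by simp
qed

lemma SS_all: "k \<le> N \<Longrightarrow> SS \<xi> N k = SS \<xi> N N"
proof -
  have "d \<le> N \<Longrightarrow> SS \<xi> N (N - d) = SS \<xi> N N" for d
  proof (induction d)
    case (Suc d)
    have "SS \<xi> N (N - Suc d) = SS \<xi> N (N - d - 1)" by simp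
    also have "\<dots> = SS \<xi> N (N - d)" using Suc.prems by (intro SS_step) auto
    finally show ?case using Suc by simp
  qed simp
  from this[of "N - k"] show "k \<le> N \<Longrightarrow> ?thesis" by simp
qed

end

lemma SS_N:
  fixes \<xi> :: "nat \<Rightarrow> complex"
  assumes small: "\<And>i. i \<in> {1..N} \<Longrightarrow> cmod (\<xi> i) < 1"
  shows "SS \<xi> N N = (\<Prod>j=1..N. \<Prod>i=1..<j. (\<xi> j / (1 - \<xi> j) - \<xi> i / (1 - \<xi> i)))"
proof -
  have "SS \<xi> N N = (\<Sum>\<sigma> | \<sigma> permutes {1..N}. of_int (sign \<sigma>) *
            (\<Prod>j=1..N. ((\<lambda>i. \<xi> i / (1 - \<xi> i)) (\<sigma> j)) ^ (j-1)))"
    unfolding SS_def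
  proof (intro sum.cong refl)
    fix \<sigma> assume "\<sigma> \<in> {\<sigma>. \<sigma> permutes {1..N}}"
    have D: "DD \<xi> N N \<sigma> = 1" unfolding DD_def by simp
    have P: "PI \<xi> N N \<sigma> = (\<Prod>j=1..N. ((\<lambda>i. \<xi> i / (1 - \<xi> i)) (\<sigma> j)) ^ (j-1))"
      unfolding PI_def
    proof (intro prod.cong refl)
      fix j assume j: "j \<in> {1..N}"
      then have "cc N j = int (j - 1)" by (auto simp: cc_def)
      then show "(1 / (1 - \<xi> (\<sigma> j))) powi cc N j * \<xi> (\<sigma> j) ^ (j - 1) = (\<xi> (\<sigma> j) / (1 - \<xi> (\<sigma> j))) ^ (j - 1)"
        by (simp add: power_divide)
    qed
    show "of_int (sign \<sigma>) * TT \<xi> N N \<sigma> = of_int (sign \<sigma>) * (\<Prod>j=1..N. ((\<lambda>i. \<xi> i / (1 - \<xi> i)) (\<sigma> j)) ^ (j-1))"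
      unfolding TT_def D P by simp
  qed
  also have "\<dots> = (\<Prod>j=1..N. \<Prod>i=1..<j. (\<xi> j / (1 - \<xi> j) - \<xi> i / (1 - \<xi> i)))"
    by (rule vandermonde1)
  finally show ?thesis .
qed

theorem lemma3p1:
  fixes N k :: nat and \<xi> :: "nat \<Rightarrow> complex"
  assumes "N \<ge> 2" and "k \<le> N"
    and "\<And>i. i \<in> {1..N} \<Longrightarrow> cmod (\<xi> i) < 1"
  shows "(\<Sum>\<sigma> | \<sigma> permutes {1..N}.
            of_int (sign \<sigma>)
          * (\<Prod>j=1..k. ((1 - \<xi> j) / (1 - \<xi> (\<sigma> j))) powi (int j - 1))
          * (\<Prod>j=k+1..N. ((1 - \<xi> j) / (1 - \<xi> (\<sigma> j))) powi (int j - 2))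
          * ((\<Prod>j=2..N. \<xi> (\<sigma> j) ^ (j - 1))
             / (\<Prod>m=k+1..N. (1 - (\<Prod>l=m..N. \<xi> (\<sigma> l))))))
       = (\<Prod>i=1..k. (1 - \<xi> i))
         * (\<Prod>j=1..N. \<Prod>i=1..<j. (\<xi> j - \<xi> i) / (1 - \<xi> i))
         * (\<Prod>i=1..N. 1 / (1 - \<xi> i))"
proof -
  note small = assms(3)
  have anz: "1 - \<xi> i \<noteq> 0" if "i \<in> {1..N}" for i using small[OF that] by auto
  define C where "C = (\<Prod>j=1..N. (1 - \<xi> j) powi cc k j)"
  have U: "{1..N} = {1..k} \<union> {k+1..N}" using assms(2) by auto
  have splitN: "(\<Prod>j=1..N. g j) = (\<Prod>j=1..k. g j) * (\<Prod>j=k+1..N. g j)" for g :: "nat \<Rightarrow> complex"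
    by (subst U, rule prod.union_disjoint) auto
  have summand: "of_int (sign \<sigma>)
          * (\<Prod>j=1..k. ((1 - \<xi> j) / (1 - \<xi> (\<sigma> j))) powi (int j - 1))
          * (\<Prod>j=k+1..N. ((1 - \<xi> j) / (1 - \<xi> (\<sigma> j))) powi (int j - 2))
          * ((\<Prod>j=2..N. \<xi> (\<sigma> j) ^ (j - 1))
             / (\<Prod>m=k+1..N. (1 - (\<Prod>l=m..N. \<xi> (\<sigma> l)))))
      = C * (of_int (sign \<sigma>) * TT \<xi> N k \<sigma>)" if \<sigma>: "\<sigma> permutes {1..N}" for \<sigma>
  proof -
    have p1: "(\<Prod>j=1..k. ((1 - \<xi> j) / (1 - \<xi> (\<sigma> j))) powi (int j - 1))
          * (\<Prod>j=k+1..N. ((1 - \<xi> j) / (1 - \<xi> (\<sigma> j))) powi (int j - 2))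
        = (\<Prod>j=1..N. ((1 - \<xi> j) / (1 - \<xi> (\<sigma> j))) powi cc k j)"
      unfolding splitN by (intro arg_cong2[where f="(*)"] prod.cong refl) (auto simp: cc_def)
    have p2: "(\<Prod>j=1..N. ((1 - \<xi> j) / (1 - \<xi> (\<sigma> j))) powi cc k j)
        = C * (\<Prod>j=1..N. (1 / (1 - \<xi> (\<sigma> j))) powi cc k j)"
      unfolding C_def prod.distrib[symmetric]
      by (intro prod.cong refl) (simp add: power_int_divide_distrib)
    have ins: "{1..N} = insert 1 {2..N}" using assms(1) by auto
    have p3: "(\<Prod>j=2..N. \<xi> (\<sigma> j) ^ (j - 1)) = (\<Prod>j=1..N. \<xi> (\<sigma> j) ^ (j - 1))"
      by (subst ins, subst prod.insert) auto
    have p4: "PI \<xi> N k \<sigma> = (\<Prod>j=1..N. (1 / (1 - \<xi> (\<sigma> j))) powi cc k j) * (\<Prod>j=1..N. \<xi> (\<sigma> j) ^ (j - 1))"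
      unfolding PI_def by (simp add: prod.distrib)
    have p5: "(\<Prod>m=k+1..N. (1 - (\<Prod>l=m..N. \<xi> (\<sigma> l)))) = DD \<xi> N k \<sigma>"
      unfolding DD_def PP_def ..
    show ?thesis
      unfolding p5 p3 mult.assoc[of "of_int (sign \<sigma>)"] p1 p2 TT_def p4 by simp
  qed
  have LHS: "(\<Sum>\<sigma> | \<sigma> permutes {1..N}.
            of_int (sign \<sigma>)
          * (\<Prod>j=1..k. ((1 - \<xi> j) / (1 - \<xi> (\<sigma> j))) powi (int j - 1))
          * (\<Prod>j=k+1..N. ((1 - \<xi> j) / (1 - \<xi> (\<sigma> j))) powi (int j - 2))
          * ((\<Prod>j=2..N. \<xi> (\<sigma> j) ^ (j - 1))
             / (\<Prod>m=k+1..N. (1 - (\<Prod>l=m..N. \<xi> (\<sigma> l))))))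
        = C * SS \<xi> N k"
    unfolding SS_def sum_distrib_left by (intro sum.cong refl) (rule summand, simp)
  have S: "SS \<xi> N k = (\<Prod>j=1..N. \<Prod>i=1..<j. (\<xi> j / (1 - \<xi> j) - \<xi> i / (1 - \<xi> i)))"
    using SS_all[OF small assms(2)] SS_N[OF small] by simp
  have W: "(\<Prod>j=1..N. \<Prod>i=1..<j. (\<xi> j / (1 - \<xi> j) - \<xi> i / (1 - \<xi> i)))
      = (\<Prod>j=1..N. \<Prod>i=1..<j. (\<xi> j - \<xi> i) / (1 - \<xi> i)) * (\<Prod>j=1..N. (1 / (1 - \<xi> j)) ^ (j - 1))"
    unfolding prod.distrib[symmetric]
  proof (intro prod.cong refl)
    fix j assume j: "j \<in> {1..N}"
    have "(\<Prod>i=1..<j. (\<xi> j / (1 - \<xi> j) - \<xi> i / (1 - \<xi> i)))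
        = (\<Prod>i=1..<j. (\<xi> j - \<xi> i) / (1 - \<xi> i) * (1 / (1 - \<xi> j)))"
    proof (intro prod.cong refl)
      fix i assume i: "i \<in> {1..<j}"
      have "1 - \<xi> i \<noteq> 0" "1 - \<xi> j \<noteq> 0" using anz i j by auto
      then show "\<xi> j / (1 - \<xi> j) - \<xi> i / (1 - \<xi> i) = (\<xi> j - \<xi> i) / (1 - \<xi> i) * (1 / (1 - \<xi> j))"
        by (simp add: field_simps)
    qed
    also have "\<dots> = (\<Prod>i=1..<j. (\<xi> j - \<xi> i) / (1 - \<xi> i)) * (1 / (1 - \<xi> j)) ^ (j - 1)"
      by (simp only: prod.distrib prod_constant card_atLeastLessThan)
    finally show "(\<Prod>i=1..<j. (\<xi> j / (1 - \<xi> j) - \<xi> i / (1 - \<xi> i)))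
        = (\<Prod>i=1..<j. (\<xi> j - \<xi> i) / (1 - \<xi> i)) * (1 / (1 - \<xi> j)) ^ (j - 1)" .
  qed
  have CW: "C * (\<Prod>j=1..N. (1 / (1 - \<xi> j)) ^ (j - 1)) = (\<Prod>j=1..N. if j \<le> k then 1 else 1 / (1 - \<xi> j))"
    unfolding C_def prod.distrib[symmetric]
  proof (intro prod.cong refl)
    fix j assume j: "j \<in> {1..N}"
    then have a: "1 - \<xi> j \<noteq> 0" using anz by auto
    show "(1 - \<xi> j) powi cc k j * (1 / (1 - \<xi> j)) ^ (j - 1) = (if j \<le> k then 1 else 1 / (1 - \<xi> j))"
    proof (cases "j \<le> k")
      case True
      then have "cc k j = int (j - 1)" using j by (auto simp: cc_def)
      then show ?thesis using True a by (simp add: power_one_over)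
    next
      case False
      then have "cc k j = int (j - 1) - 1" using j by (auto simp: cc_def)
      then have e: "(1 - \<xi> j) powi cc k j = (1 - \<xi> j) ^ (j - 1) / (1 - \<xi> j)"
        using power_int_diff[of "1 - \<xi> j" "int (j - 1)" 1] a by simp
      have "(1 - \<xi> j) ^ (j - 1) \<noteq> 0" using a by simp
      then show ?thesis using False a unfolding e power_one_over by (simp add: field_simps)
    qed
  qed
  have R: "(\<Prod>i=1..k. (1 - \<xi> i)) * (\<Prod>i=1..N. 1 / (1 - \<xi> i)) = (\<Prod>j=1..N. if j \<le> k then 1 else 1 / (1 - \<xi> j))"
  proof -
    have "(\<Prod>i=1..k. (1 - \<xi> i)) * (\<Prod>i=1..k. 1 / (1 - \<xi> i)) = 1"
      unfolding prod.distrib[symmetric] by (rule prod.neutral) (use anz assms(2) in auto)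
    moreover have "(\<Prod>j=1..N. if j \<le> k then 1 else 1 / (1 - \<xi> j)) = (\<Prod>j=k+1..N. 1 / (1 - \<xi> j))"
      unfolding splitN by (simp add: prod.neutral)
    moreover have "(\<Prod>i=1..N. 1 / (1 - \<xi> i)) = (\<Prod>i=1..k. 1 / (1 - \<xi> i)) * (\<Prod>j=k+1..N. 1 / (1 - \<xi> j))"
      by (rule splitN)
    ultimately show ?thesis by (metis mult.assoc mult_1)
  qed
  show ?thesis
    unfolding LHS S W
    by (simp only: mult.assoc mult.left_commute[of C] CW R[symmetric]) (simp add: ac_simps)
qed

end
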